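(* Let $\Gamma\triangleright W$ be a well-formed CCCP configuration, $c$ a channel and $v$ a closed value, and let $\mathit{eureka},\mathit{fail}$ be channels that do not occur free in $W$ and are idle in $\Gamma$; let $\mathit{arb},\mathit{no}$ be closed values with $\delta_{\mathit{arb}}=\delta_{\mathit{no}}=1$. Define $T_{c?v}=c!\langle v\rangle.\mathit{eureka}!\langle\mathit{arb}\rangle.\mathbf 0+\mathit{fail}!\langle\mathit{no}\rangle.\mathbf 0$ and $T^{\checkmark}_{c?v}=\sigma^{\delta_v}.\mathit{eureka}!\langle\mathit{arb}\rangle.\mathbf 0$. Then $\Gamma\triangleright W\overset{c?v}{\Rightarrow}\Gamma'\triangleright W'$ if and only if $\Gamma\triangleright W|T_{c?v}\to_i^*\Gamma'\triangleright W'|T^{\checkmark}_{c?v}$.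
   Context: CCCP syntax. Fix a set of channels (ranged over by $c,d$) and a set of values containing data variables $x,y$ and a special error value $\mathtt{err}$; closed values $v,w$ contain no variables, and each closed value $v$ has a transmission time $\delta_v\in\mathbb{N}$ with $\delta_v\ge 1$. Expressions $e$ are built from values; closed expressions evaluate to closed values via $[\![e]\!]$. Station code (processes) is given by $P,Q ::= c!\langle e\rangle.P \mid \lfloor ?c(x).P\rfloor Q \mid \sigma.P \mid \tau.P \mid P+Q \mid [b]P,Q \mid X \mid \mathbf{0} \mid \mathrm{fix}\,X.P$, where $b$ is either $e_1=e_2$ or $\mathrm{exp}(c)$, $[b]P,Q$ is a conditional (then-branch $P$, else-branch $Q$), $\lfloor ?c(x).P\rfloor Q$ is a receiver on $c$ with timeout branch $Q$ ($x$ bound in $P$), $\sigma.P$ is a one-unit delay and $\sigma^n.P$ denotes $n$ nested delays. System terms are $W ::= P \mid \lfloor ?c(x).P\rfloor \mid W_1|W_2 \mid \nu c{:}(n,v).W$, where $\lfloor ?c(x).P\rfloor$ is an active receiver ($x$ bound in $P$) and $\nu c{:}(n,v).W$ restricts $c$ with local channel state $(n,v)$. In $\mathrm{fix}\,X.P$ every occurrence of $X$ in $P$ is guarded, i.e. lies within a broadcast prefix, a receiver continuation, a timeout branch, a $\sigma$-prefix, or a branch of a conditional. Terms are identified up to $\alpha$-conversion. A channel environment is a map $\Gamma$ from channels to $\mathbb{N}\times$(closed values); write $\Gamma\vdash_t c:n$ and $\Gamma\vdash_v c:w$ when $\Gamma(c)=(n,w)$; $c$ is idle in $\Gamma$ if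 $\Gamma\vdash_t c:0$ and exposed otherwise; $\Gamma[c\mapsto(n,v)]$ is $\Gamma$ updated at $c$; $\Gamma\le\Gamma'$ iff for every $c$, $\Gamma\vdash_t c:n$ and $\Gamma'\vdash_t c:m$ imply $n\le m$. A configuration $\Gamma\triangleright W$ is a channel environment together with a closed system term (no free data or process variables). Intensional semantics. Actions $\lambda$ are $c!v$, $c?v$, $\sigma$, $\tau$. The environment update $\lambda(\Gamma)$ is: $\sigma(\Gamma)(c)=(\max(n-1,0),w)$ whenever $\Gamma(c)=(n,w)$; $c!v(\Gamma)$ agrees with $\Gamma$ except at $c$, where it is $(\delta_v,v)$ if $c$ is idle in $\Gamma$ and $(\max(\delta_v,n),\mathtt{err})$ if $\Gamma\vdash_t c:n>0$; $c?v(\Gamma)=c!v(\Gamma)$; $\tau(\Gamma)=\Gamma$. The predicate $\mathrm{rcv}(W,c)$ on terms is: true for $\lfloor ?d(x).P\rfloor Q$ iff $d=c$; $\mathrm{rcv}(P+Q,c)=\mathrm{rcv}(P,c)\vee\mathrm{rcv}(Q,c)$; $\mathrm{rcv}(\mathrm{fix}\,X.P,c)=\mathrm{rcv}(P,c)$; $\mathrm{rcv}(W_1|W_2,c)=\mathrm{rcv}(W_1,c)\vee\mathrm{rcv}(W_2,c)$; $\mathrm{rcv}(\nu d{:}(n,v).W,c)=\mathrm{rcv}(W,c)$ (with $d\neq c$ by $\alpha$-conversion); false for all other forms (broadcasts, $\tau.P$, $\sigma.P$, conditionals, $X$, $\mathbf 0$, active receivers). Then $\mathrm{rcv}(\Gamma\triangleright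 W,c)$ holds iff $c$ is idle in $\Gamma$ and $\mathrm{rcv}(W,c)$. Transitions $\Gamma\triangleright W\xrightarrow{\lambda}W'$ are the least relation closed under: (Snd) $[\![e]\!]=v$ implies $\Gamma\triangleright c!\langle e\rangle.P\xrightarrow{c!v}\sigma^{\delta_v}.P$; (Rcv) $c$ idle in $\Gamma$ implies $\Gamma\triangleright\lfloor ?c(x).P\rfloor Q\xrightarrow{c?v}\lfloor ?c(x).P\rfloor$; (RcvIgn) $\neg\mathrm{rcv}(\Gamma\triangleright W,c)$ implies $\Gamma\triangleright W\xrightarrow{c?v}W$; (Sync) $\Gamma\triangleright W_1\xrightarrow{c!v}W_1'$ and $\Gamma\triangleright W_2\xrightarrow{c?v}W_2'$ imply $\Gamma\triangleright W_1|W_2\xrightarrow{c!v}W_1'|W_2'$, and symmetrically; (RcvPar) $\Gamma\triangleright W_i\xrightarrow{c?v}W_i'$ for $i=1,2$ imply $\Gamma\triangleright W_1|W_2\xrightarrow{c?v}W_1'|W_2'$; (TimeNil) $\Gamma\triangleright\mathbf 0\xrightarrow{\sigma}\mathbf 0$; (Sleep) $\Gamma\triangleright\sigma.P\xrightarrow{\sigma}P$; (ActRcv) $\Gamma\vdash_t c:n$, $n>1$ imply $\Gamma\triangleright\lfloor ?c(x).P\rfloor\xrightarrow{\sigma}\lfloor ?c(x).P\rfloor$; (EndRcv) $\Gamma\vdash_t c:1$, $\Gamma\vdash_v c:w$ imply $\Gamma\triangleright\lfloor ?c(x).P\rfloor\xrightarrow{\sigma}\{w/x\}P$; (Timeout)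 $c$ idle in $\Gamma$ implies $\Gamma\triangleright\lfloor ?c(x).P\rfloor Q\xrightarrow{\sigma}Q$; (RcvLate) $c$ exposed in $\Gamma$ implies $\Gamma\triangleright\lfloor ?c(x).P\rfloor Q\xrightarrow{\tau}\lfloor ?c(x).\{\mathtt{err}/x\}P\rfloor$; (Tau) $\Gamma\triangleright\tau.P\xrightarrow{\tau}P$; (Then)/(Else) $\Gamma\triangleright[b]P,Q\xrightarrow{\tau}\sigma.P$ if $[\![b]\!]_\Gamma$ is true and $\xrightarrow{\tau}\sigma.Q$ otherwise, where $[\![e_1=e_2]\!]_\Gamma$ is true iff $[\![e_1]\!]=[\![e_2]\!]$ and $[\![\mathrm{exp}(c)]\!]_\Gamma$ is true iff $c$ is exposed in $\Gamma$; (TimePar) $\Gamma\triangleright W_i\xrightarrow{\sigma}W_i'$ for $i=1,2$ imply $\Gamma\triangleright W_1|W_2\xrightarrow{\sigma}W_1'|W_2'$; (TauPar) $\Gamma\triangleright W_1\xrightarrow{\tau}W_1'$ implies $\Gamma\triangleright W_1|W_2\xrightarrow{\tau}W_1'|W_2$, and symmetrically; (Rec) $\Gamma\triangleright\{\mathrm{fix}\,X.P/X\}P\xrightarrow{\lambda}W$ implies $\Gamma\triangleright\mathrm{fix}\,X.P\xrightarrow{\lambda}W$; (Sum) for $\lambda\in\{\tau,c!v\}$, $\Gamma\triangleright P\xrightarrow{\lambda}W$ implies $\Gamma\triangleright P+Q\xrightarrow{\lambda}W$, and symmetrically; (SumTime) $\Gamma\triangleright P\xrightarrow{\sigma}P'$,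 $\Gamma\triangleright Q\xrightarrow{\sigma}Q'$ imply $\Gamma\triangleright P+Q\xrightarrow{\sigma}P'+Q'$; (SumRcv) $\Gamma\triangleright P\xrightarrow{c?v}W$ and $\mathrm{rcv}(\Gamma\triangleright P,c)$ imply $\Gamma\triangleright P+Q\xrightarrow{c?v}W$, and symmetrically; (ResI) $\Gamma[c\mapsto(n,v)]\triangleright W\xrightarrow{c!w}W'$ implies $\Gamma\triangleright\nu c{:}(n,v).W\xrightarrow{\tau}\nu c{:}(c!w(\Gamma[c\mapsto(n,v)]))(c).W'$; (ResV) $\Gamma[c\mapsto(n,v)]\triangleright W\xrightarrow{\lambda}W'$ with $c$ not occurring in $\lambda$ implies $\Gamma\triangleright\nu c{:}(n,v).W\xrightarrow{\lambda}\nu c{:}(\lambda(\Gamma[c\mapsto(n,v)]))(c).W'$. Reductions. $\Gamma\triangleright W\to\Gamma'\triangleright W'$ iff $\Gamma\triangleright W\xrightarrow{\lambda}W'$ for some $\lambda\in\{c!v,\sigma,\tau\}$ and $\Gamma'=\lambda(\Gamma)$; it is instantaneous ($\to_i$) if $\lambda\neq\sigma$ and timed ($\to_\sigma$) if $\lambda=\sigma$. Extensional semantics. Extensional actions $\alpha\in\{c?v,\sigma,\tau,\gamma(c,v),\iota(c)\}$ between configurations are given by: (Input) $\Gamma\triangleright W\xrightarrow{c?v}W'$ implies $\Gamma\triangleright W\overset{c?v}{\rightarrowtail}c?v(\Gamma)\triangleright W'$; (Time) $\Gamma\triangleright W\xrightarrow{\sigma}W'$ implies $\Gamma\triangleright W\overset{\sigma}{\rightarrowtail}\sigma(\Gamma)\triangleright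 W'$; (Shh) $\Gamma\triangleright W\xrightarrow{c!v}W'$ implies $\Gamma\triangleright W\overset{\tau}{\rightarrowtail}c!v(\Gamma)\triangleright W'$; (TauExt) $\Gamma\triangleright W\xrightarrow{\tau}W'$ implies $\Gamma\triangleright W\overset{\tau}{\rightarrowtail}\Gamma\triangleright W'$; (Deliver) $\Gamma(c)=(1,v)$ and $\Gamma\triangleright W\xrightarrow{\sigma}W'$ imply $\Gamma\triangleright W\overset{\gamma(c,v)}{\rightarrowtail}\sigma(\Gamma)\triangleright W'$; (Idle) $c$ idle in $\Gamma$ implies $\Gamma\triangleright W\overset{\iota(c)}{\rightarrowtail}\Gamma\triangleright W$. Weak actions: $\Rightarrow$ is the reflexive-transitive closure of $\overset{\tau}{\rightarrowtail}$; $\overset{\alpha}{\Rightarrow}$ is $\Rightarrow\overset{\alpha}{\rightarrowtail}\Rightarrow$. Well-formedness. The set of well-formed configurations is the least set such that: $\Gamma\triangleright P$ is well-formed for every closed process $P$; $\Gamma\triangleright\lfloor ?c(x).P\rfloor$ is well-formed whenever $c$ is exposed in $\Gamma$; $\Gamma\triangleright W_1|W_2$ is well-formed whenever $\Gamma\triangleright W_1$ and $\Gamma\triangleright W_2$ are; $\Gamma\triangleright\nu c{:}(n,v).W$ is well-formed whenever $\Gamma[c\mapsto(n,v)]\triangleright W$ is. *)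

theory Defs
  imports Main
begin

section \<open>CCCP: syntax (locally nameless / de Bruijn representation)\<close>

text \<open>Semantic parameters: the transmission time of closed values, the error value,
  and the interpretation of the expression operators.  Closed values have type 'v.\<close>

record ('v, 'f) cccp_sig =
  delta :: "'v \<Rightarrow> nat"
  errv  :: "'v"
  interp :: "'f \<Rightarrow> 'v list \<Rightarrow> 'v"

type_synonym chan = nat

text \<open>Channel references: free channel names, or de Bruijn indices bound by restriction.\<close>
datatype chref = CF chan | CB nat

datatype ('v, 'f) expr = EVal 'v | EVar nat | EOp 'f "('v, 'f) expr list"

datatype ('v, 'f) bexp = BEq "('v, 'f) expr" "('v, 'f) expr" | BExp chref

text \<open>Station code.  Data variables bound by receivers and process variables bound by fix
  are de Bruijn indices, so terms are identified up to alpha-conversion.\<close>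
datatype ('v, 'f) proc =
    PSnd chref "('v, 'f) expr" "('v, 'f) proc"
  | PRcv chref "('v, 'f) proc" "('v, 'f) proc"           (* |_?c(x).P_| Q, x bound in P *)
  | PSleep "('v, 'f) proc"
  | PTau "('v, 'f) proc"
  | PSum "('v, 'f) proc" "('v, 'f) proc"
  | PCond "('v, 'f) bexp" "('v, 'f) proc" "('v, 'f) proc"
  | PVar nat
  | PNil
  | PFix "('v, 'f) proc"

datatype ('v, 'f) sys =
    SProc "('v, 'f) proc"
  | SAct chref "('v, 'f) proc"            (* active receiver |_?c(x).P_| , x bound *)
  | SPar "('v, 'f) sys" "('v, 'f) sys"
  | SNu nat 'v "('v, 'f) sys"             (* nu c:(n,v).W, c bound *)

fun sigmas :: "nat \<Rightarrow> ('v, 'f) proc \<Rightarrow> ('v, 'f) proc" where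
  "sigmas 0 P = P"
| "sigmas (Suc n) P = PSleep (sigmas n P)"

fun closedE :: "nat \<Rightarrow> ('v, 'f) expr \<Rightarrow> bool" where
  "closedE d (EVal v) = True"
| "closedE d (EVar n) = (n < d)"
| "closedE d (EOp f es) = (\<forall>e\<in>set es. closedE d e)"

fun okC :: "nat \<Rightarrow> chref \<Rightarrow> bool" where
  "okC k (CF a) = True"
| "okC k (CB i) = (i < k)"

fun okB :: "nat \<Rightarrow> nat \<Rightarrow> ('v, 'f) bexp \<Rightarrow> bool" where
  "okB d k (BEq e1 e2) = (closedE d e1 \<and> closedE d e2)"
| "okB d k (BExp c) = okC k c"

text \<open>okP d p k P: data variables below d, process variables below p, bound channels below k.\<close>
primrec okP :: "nat \<Rightarrow> nat \<Rightarrow> nat \<Rightarrow> ('v, 'f) proc \<Rightarrow> bool" where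
  "okP d p k (PSnd c e P) = (okC k c \<and> closedE d e \<and> okP d p k P)"
| "okP d p k (PRcv c P Q) = (okC k c \<and> okP (Suc d) p k P \<and> okP d p k Q)"
| "okP d p k (PSleep P) = okP d p k P"
| "okP d p k (PTau P) = okP d p k P"
| "okP d p k (PSum P Q) = (okP d p k P \<and> okP d p k Q)"
| "okP d p k (PCond b P Q) = (okB d k b \<and> okP d p k P \<and> okP d p k Q)"
| "okP d p k (PVar n) = (n < p)"
| "okP d p k PNil = True"
| "okP d p k (PFix P) = okP d (Suc p) k P"

primrec okS :: "nat \<Rightarrow> ('v, 'f) sys \<Rightarrow> bool" where
  "okS k (SProc P) = okP 0 0 k P"
| "okS k (SAct c P) = (okC k c \<and> okP 1 0 k P)"
| "okS k (SPar W1 W2) = (okS k W1 \<and> okS k W2)"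
| "okS k (SNu n v W) = okS (Suc k) W"

definition closedS :: "('v, 'f) sys \<Rightarrow> bool" where
  "closedS W = okS 0 W"

fun fcC :: "chref \<Rightarrow> chan set" where
  "fcC (CF a) = {a}"
| "fcC (CB i) = {}"

fun fcB :: "('v, 'f) bexp \<Rightarrow> chan set" where
  "fcB (BEq e1 e2) = {}"
| "fcB (BExp c) = fcC c"

primrec fcP :: "('v, 'f) proc \<Rightarrow> chan set" where
  "fcP (PSnd c e P) = fcC c \<union> fcP P"
| "fcP (PRcv c P Q) = fcC c \<union> fcP P \<union> fcP Q"
| "fcP (PSleep P) = fcP P"
| "fcP (PTau P) = fcP P"
| "fcP (PSum P Q) = fcP P \<union> fcP Q"
| "fcP (PCond b P Q) = fcB b \<union> fcP P \<union> fcP Q"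
| "fcP (PVar n) = {}"
| "fcP PNil = {}"
| "fcP (PFix P) = fcP P"

primrec fcS :: "('v, 'f) sys \<Rightarrow> chan set" where
  "fcS (SProc P) = fcP P"
| "fcS (SAct c P) = fcC c \<union> fcP P"
| "fcS (SPar W1 W2) = fcS W1 \<union> fcS W2"
| "fcS (SNu n v W) = fcS W"

fun openC :: "nat \<Rightarrow> chan \<Rightarrow> chref \<Rightarrow> chref" where
  "openC k a (CB i) = (if i = k then CF a else CB i)"
| "openC k a (CF b) = CF b"

fun closeC :: "nat \<Rightarrow> chan \<Rightarrow> chref \<Rightarrow> chref" where
  "closeC k a (CF b) = (if b = a then CB k else CF b)"
| "closeC k a (CB i) = CB i"

fun mapB :: "(chref \<Rightarrow> chref) \<Rightarrow> ('v, 'f) bexp \<Rightarrow> ('v, 'f) bexp" where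
  "mapB g (BEq e1 e2) = BEq e1 e2"
| "mapB g (BExp c) = BExp (g c)"

primrec mapChP :: "(chref \<Rightarrow> chref) \<Rightarrow> ('v, 'f) proc \<Rightarrow> ('v, 'f) proc" where
  "mapChP g (PSnd c e P) = PSnd (g c) e (mapChP g P)"
| "mapChP g (PRcv c P Q) = PRcv (g c) (mapChP g P) (mapChP g Q)"
| "mapChP g (PSleep P) = PSleep (mapChP g P)"
| "mapChP g (PTau P) = PTau (mapChP g P)"
| "mapChP g (PSum P Q) = PSum (mapChP g P) (mapChP g Q)"
| "mapChP g (PCond b P Q) = PCond (mapB g b) (mapChP g P) (mapChP g Q)"
| "mapChP g (PVar n) = PVar n"
| "mapChP g PNil = PNil"
| "mapChP g (PFix P) = PFix (mapChP g P)"

text \<open>Processes bind no channels, so the channel de Bruijn level only changes at nu.\<close>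
primrec openS :: "nat \<Rightarrow> chan \<Rightarrow> ('v, 'f) sys \<Rightarrow> ('v, 'f) sys" where
  "openS k a (SProc P) = SProc (mapChP (openC k a) P)"
| "openS k a (SAct c P) = SAct (openC k a c) (mapChP (openC k a) P)"
| "openS k a (SPar W1 W2) = SPar (openS k a W1) (openS k a W2)"
| "openS k a (SNu n v W) = SNu n v (openS (Suc k) a W)"

primrec closeS :: "nat \<Rightarrow> chan \<Rightarrow> ('v, 'f) sys \<Rightarrow> ('v, 'f) sys" where
  "closeS k a (SProc P) = SProc (mapChP (closeC k a) P)"
| "closeS k a (SAct c P) = SAct (closeC k a c) (mapChP (closeC k a) P)"
| "closeS k a (SPar W1 W2) = SPar (closeS k a W1) (closeS k a W2)"
| "closeS k a (SNu n v W) = SNu n v (closeS (Suc k) a W)"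

section \<open>Substitution (de Bruijn, with shifting)\<close>

primrec liftE :: "nat \<Rightarrow> ('v, 'f) expr \<Rightarrow> ('v, 'f) expr" where
  "liftE k (EVal v) = EVal v"
| "liftE k (EVar n) = (if n < k then EVar n else EVar (Suc n))"
| "liftE k (EOp f es) = EOp f (map (liftE k) es)"

primrec substE :: "nat \<Rightarrow> 'v \<Rightarrow> ('v, 'f) expr \<Rightarrow> ('v, 'f) expr" where
  "substE k w (EVal v) = EVal v"
| "substE k w (EVar n) = (if n = k then EVal w else if k < n then EVar (n - 1) else EVar n)"
| "substE k w (EOp f es) = EOp f (map (substE k w) es)"

fun mapEB :: "(('v, 'f) expr \<Rightarrow> ('v, 'f) expr) \<Rightarrow> ('v, 'f) bexp \<Rightarrow> ('v, 'f) bexp" where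
  "mapEB g (BEq e1 e2) = BEq (g e1) (g e2)"
| "mapEB g (BExp c) = BExp c"

primrec liftPd :: "nat \<Rightarrow> ('v, 'f) proc \<Rightarrow> ('v, 'f) proc" where
  "liftPd k (PSnd c e P) = PSnd c (liftE k e) (liftPd k P)"
| "liftPd k (PRcv c P Q) = PRcv c (liftPd (Suc k) P) (liftPd k Q)"
| "liftPd k (PSleep P) = PSleep (liftPd k P)"
| "liftPd k (PTau P) = PTau (liftPd k P)"
| "liftPd k (PSum P Q) = PSum (liftPd k P) (liftPd k Q)"
| "liftPd k (PCond b P Q) = PCond (mapEB (liftE k) b) (liftPd k P) (liftPd k Q)"
| "liftPd k (PVar n) = PVar n"
| "liftPd k PNil = PNil"
| "liftPd k (PFix P) = PFix (liftPd k P)"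

primrec liftPp :: "nat \<Rightarrow> ('v, 'f) proc \<Rightarrow> ('v, 'f) proc" where
  "liftPp k (PSnd c e P) = PSnd c e (liftPp k P)"
| "liftPp k (PRcv c P Q) = PRcv c (liftPp k P) (liftPp k Q)"
| "liftPp k (PSleep P) = PSleep (liftPp k P)"
| "liftPp k (PTau P) = PTau (liftPp k P)"
| "liftPp k (PSum P Q) = PSum (liftPp k P) (liftPp k Q)"
| "liftPp k (PCond b P Q) = PCond b (liftPp k P) (liftPp k Q)"
| "liftPp k (PVar n) = (if n < k then PVar n else PVar (Suc n))"
| "liftPp k PNil = PNil"
| "liftPp k (PFix P) = PFix (liftPp (Suc k) P)"

primrec substPd :: "nat \<Rightarrow> 'v \<Rightarrow> ('v, 'f) proc \<Rightarrow> ('v, 'f) proc" where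
  "substPd k w (PSnd c e P) = PSnd c (substE k w e) (substPd k w P)"
| "substPd k w (PRcv c P Q) = PRcv c (substPd (Suc k) w P) (substPd k w Q)"
| "substPd k w (PSleep P) = PSleep (substPd k w P)"
| "substPd k w (PTau P) = PTau (substPd k w P)"
| "substPd k w (PSum P Q) = PSum (substPd k w P) (substPd k w Q)"
| "substPd k w (PCond b P Q) = PCond (mapEB (substE k w) b) (substPd k w P) (substPd k w Q)"
| "substPd k w (PVar n) = PVar n"
| "substPd k w PNil = PNil"
| "substPd k w (PFix P) = PFix (substPd k w P)"

primrec substPp :: "nat \<Rightarrow> ('v, 'f) proc \<Rightarrow> ('v, 'f) proc \<Rightarrow> ('v, 'f) proc" where
  "substPp k T (PSnd c e P) = PSnd c e (substPp k T P)"
| "substPp k T (PRcv c P Q) = PRcv c (substPp k (liftPd 0 T) P) (substPp k T Q)"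
| "substPp k T (PSleep P) = PSleep (substPp k T P)"
| "substPp k T (PTau P) = PTau (substPp k T P)"
| "substPp k T (PSum P Q) = PSum (substPp k T P) (substPp k T Q)"
| "substPp k T (PCond b P Q) = PCond b (substPp k T P) (substPp k T Q)"
| "substPp k T (PVar n) = (if n = k then T else if k < n then PVar (n - 1) else PVar n)"
| "substPp k T PNil = PNil"
| "substPp k T (PFix P) = PFix (substPp (Suc k) (liftPp 0 T) P)"

fun evalE :: "('f \<Rightarrow> 'v list \<Rightarrow> 'v) \<Rightarrow> ('v, 'f) expr \<Rightarrow> 'v option" where
  "evalE I (EVal v) = Some v"
| "evalE I (EVar n) = None"
| "evalE I (EOp f es) =
     (if (\<forall>e\<in>set es. evalE I e \<noteq> None) then Some (I f (map (\<lambda>e. the (evalE I e)) es)) else None)"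

type_synonym 'v env = "chan \<Rightarrow> nat \<times> 'v"

definition idle :: "'v env \<Rightarrow> chan \<Rightarrow> bool" where
  "idle \<Gamma> c = (fst (\<Gamma> c) = 0)"

definition exposed :: "'v env \<Rightarrow> chan \<Rightarrow> bool" where
  "exposed \<Gamma> c = (fst (\<Gamma> c) > 0)"

fun evalB :: "('f \<Rightarrow> 'v list \<Rightarrow> 'v) \<Rightarrow> 'v env \<Rightarrow> ('v, 'f) bexp \<Rightarrow> bool" where
  "evalB I \<Gamma> (BEq e1 e2) = (evalE I e1 = evalE I e2)"
| "evalB I \<Gamma> (BExp (CF c)) = exposed \<Gamma> c"
| "evalB I \<Gamma> (BExp (CB i)) = False"

datatype 'v act = AOut chan 'v | AIn chan 'v | ASig | ATau

fun chans_act :: "'v act \<Rightarrow> chan set" where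
  "chans_act (AOut c v) = {c}"
| "chans_act (AIn c v) = {c}"
| "chans_act ASig = {}"
| "chans_act ATau = {}"

definition bcast_upd :: "('v, 'f) cccp_sig \<Rightarrow> chan \<Rightarrow> 'v \<Rightarrow> 'v env \<Rightarrow> 'v env" where
  "bcast_upd S c v \<Gamma> =
     \<Gamma>(c := (if fst (\<Gamma> c) = 0 then (delta S v, v)
             else (max (delta S v) (fst (\<Gamma> c)), errv S)))"

fun upd :: "('v, 'f) cccp_sig \<Rightarrow> 'v act \<Rightarrow> 'v env \<Rightarrow> 'v env" where
  "upd S (AOut c v) \<Gamma> = bcast_upd S c v \<Gamma>"
| "upd S (AIn c v) \<Gamma> = bcast_upd S c v \<Gamma>"
| "upd S ASig \<Gamma> = (\<lambda>c. (fst (\<Gamma> c) - 1, snd (\<Gamma> c)))"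
| "upd S ATau \<Gamma> = \<Gamma>"

primrec rcvP :: "('v, 'f) proc \<Rightarrow> chan \<Rightarrow> bool" where
  "rcvP (PSnd d e P) c = False"
| "rcvP (PRcv d P Q) c = (d = CF c)"
| "rcvP (PSleep P) c = False"
| "rcvP (PTau P) c = False"
| "rcvP (PSum P Q) c = (rcvP P c \<or> rcvP Q c)"
| "rcvP (PCond b P Q) c = False"
| "rcvP (PVar n) c = False"
| "rcvP PNil c = False"
| "rcvP (PFix P) c = rcvP P c"

primrec rcvS :: "('v, 'f) sys \<Rightarrow> chan \<Rightarrow> bool" where
  "rcvS (SProc P) c = rcvP P c"
| "rcvS (SAct d P) c = False"
| "rcvS (SPar W1 W2) c = (rcvS W1 c \<or> rcvS W2 c)"
| "rcvS (SNu n v W) c = rcvS W c"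

definition rcv_conf :: "'v env \<Rightarrow> ('v, 'f) sys \<Rightarrow> chan \<Rightarrow> bool" where
  "rcv_conf \<Gamma> W c = (idle \<Gamma> c \<and> rcvS W c)"

section \<open>Intensional semantics\<close>

inductive trans :: "('v, 'f) cccp_sig \<Rightarrow> 'v env \<Rightarrow> ('v, 'f) sys \<Rightarrow> 'v act \<Rightarrow> ('v, 'f) sys \<Rightarrow> bool"
  for S :: "('v, 'f) cccp_sig" where
  Snd: "evalE (interp S) e = Some v \<Longrightarrow>
        trans S \<Gamma> (SProc (PSnd (CF c) e P)) (AOut c v) (SProc (sigmas (delta S v) P))"
| Rcv: "idle \<Gamma> c \<Longrightarrow> trans S \<Gamma> (SProc (PRcv (CF c) P Q)) (AIn c v) (SAct (CF c) P)"
| RcvIgn: "\<not> rcv_conf \<Gamma> W c \<Longrightarrow> trans S \<Gamma> W (AIn c v) W"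
| SyncL: "trans S \<Gamma> W1 (AOut c v) W1' \<Longrightarrow> trans S \<Gamma> W2 (AIn c v) W2' \<Longrightarrow>
          trans S \<Gamma> (SPar W1 W2) (AOut c v) (SPar W1' W2')"
| SyncR: "trans S \<Gamma> W1 (AIn c v) W1' \<Longrightarrow> trans S \<Gamma> W2 (AOut c v) W2' \<Longrightarrow>
          trans S \<Gamma> (SPar W1 W2) (AOut c v) (SPar W1' W2')"
| RcvPar: "trans S \<Gamma> W1 (AIn c v) W1' \<Longrightarrow> trans S \<Gamma> W2 (AIn c v) W2' \<Longrightarrow>
          trans S \<Gamma> (SPar W1 W2) (AIn c v) (SPar W1' W2')"
| TimeNil: "trans S \<Gamma> (SProc PNil) ASig (SProc PNil)"
| Sleep: "trans S \<Gamma> (SProc (PSleep P)) ASig (SProc P)"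
| ActRcv: "fst (\<Gamma> c) > 1 \<Longrightarrow> trans S \<Gamma> (SAct (CF c) P) ASig (SAct (CF c) P)"
| EndRcv: "\<Gamma> c = (1, w) \<Longrightarrow> trans S \<Gamma> (SAct (CF c) P) ASig (SProc (substPd 0 w P))"
| Timeout: "idle \<Gamma> c \<Longrightarrow> trans S \<Gamma> (SProc (PRcv (CF c) P Q)) ASig (SProc Q)"
| RcvLate: "exposed \<Gamma> c \<Longrightarrow>
     trans S \<Gamma> (SProc (PRcv (CF c) P Q)) ATau (SAct (CF c) (liftPd 0 (substPd 0 (errv S) P)))"
| Tau: "trans S \<Gamma> (SProc (PTau P)) ATau (SProc P)"
| Then: "evalB (interp S) \<Gamma> b \<Longrightarrow> trans S \<Gamma> (SProc (PCond b P Q)) ATau (SProc (PSleep P))"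
| Else: "\<not> evalB (interp S) \<Gamma> b \<Longrightarrow> trans S \<Gamma> (SProc (PCond b P Q)) ATau (SProc (PSleep Q))"
| TimePar: "trans S \<Gamma> W1 ASig W1' \<Longrightarrow> trans S \<Gamma> W2 ASig W2' \<Longrightarrow>
          trans S \<Gamma> (SPar W1 W2) ASig (SPar W1' W2')"
| TauParL: "trans S \<Gamma> W1 ATau W1' \<Longrightarrow> trans S \<Gamma> (SPar W1 W2) ATau (SPar W1' W2)"
| TauParR: "trans S \<Gamma> W2 ATau W2' \<Longrightarrow> trans S \<Gamma> (SPar W1 W2) ATau (SPar W1 W2')"
| Rec: "trans S \<Gamma> (SProc (substPp 0 (PFix P) P)) l W \<Longrightarrow> trans S \<Gamma> (SProc (PFix P)) l W"
| SumL: "l = ATau \<or> (\<exists>c v. l = AOut c v) \<Longrightarrow> trans S \<Gamma> (SProc P) l W \<Longrightarrow>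
          trans S \<Gamma> (SProc (PSum P Q)) l W"
| SumR: "l = ATau \<or> (\<exists>c v. l = AOut c v) \<Longrightarrow> trans S \<Gamma> (SProc Q) l W \<Longrightarrow>
          trans S \<Gamma> (SProc (PSum P Q)) l W"
| SumTime: "trans S \<Gamma> (SProc P) ASig (SProc P') \<Longrightarrow> trans S \<Gamma> (SProc Q) ASig (SProc Q') \<Longrightarrow>
          trans S \<Gamma> (SProc (PSum P Q)) ASig (SProc (PSum P' Q'))"
| SumRcvL: "trans S \<Gamma> (SProc P) (AIn c v) W \<Longrightarrow> rcv_conf \<Gamma> (SProc P) c \<Longrightarrow>
          trans S \<Gamma> (SProc (PSum P Q)) (AIn c v) W"
| SumRcvR: "trans S \<Gamma> (SProc Q) (AIn c v) W \<Longrightarrow> rcv_conf \<Gamma> (SProc Q) c \<Longrightarrow>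
          trans S \<Gamma> (SProc (PSum P Q)) (AIn c v) W"
| ResI: "a \<notin> fcS W \<Longrightarrow>
         trans S (\<Gamma>(a := (n, v))) (openS 0 a W) (AOut a w) W' \<Longrightarrow>
         upd S (AOut a w) (\<Gamma>(a := (n, v))) a = (n', v') \<Longrightarrow>
         trans S \<Gamma> (SNu n v W) ATau (SNu n' v' (closeS 0 a W'))"
| ResV: "a \<notin> fcS W \<Longrightarrow> a \<notin> chans_act l \<Longrightarrow>
         trans S (\<Gamma>(a := (n, v))) (openS 0 a W) l W' \<Longrightarrow>
         upd S l (\<Gamma>(a := (n, v))) a = (n', v') \<Longrightarrow>
         trans S \<Gamma> (SNu n v W) l (SNu n' v' (closeS 0 a W'))"

definition red_i :: "('v, 'f) cccp_sig \<Rightarrow> 'v env \<times> ('v, 'f) sys \<Rightarrow> 'v env \<times> ('v, 'f) sys \<Rightarrow> bool" where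
  "red_i S C C' = (\<exists>l. (l = ATau \<or> (\<exists>c v. l = AOut c v)) \<and>
       trans S (fst C) (snd C) l (snd C') \<and> fst C' = upd S l (fst C))"

definition red_sigma :: "('v, 'f) cccp_sig \<Rightarrow> 'v env \<times> ('v, 'f) sys \<Rightarrow> 'v env \<times> ('v, 'f) sys \<Rightarrow> bool" where
  "red_sigma S C C' = (trans S (fst C) (snd C) ASig (snd C') \<and> fst C' = upd S ASig (fst C))"

section \<open>Extensional semantics\<close>

datatype 'v eact = EIn chan 'v | ESig | ETau | EGamma chan 'v | EIota chan

inductive ext :: "('v, 'f) cccp_sig \<Rightarrow> 'v env \<times> ('v, 'f) sys \<Rightarrow> 'v eact \<Rightarrow> 'v env \<times> ('v, 'f) sys \<Rightarrow> bool"
  for S :: "('v, 'f) cccp_sig" where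
  Input: "trans S \<Gamma> W (AIn c v) W' \<Longrightarrow> ext S (\<Gamma>, W) (EIn c v) (upd S (AIn c v) \<Gamma>, W')"
| Time: "trans S \<Gamma> W ASig W' \<Longrightarrow> ext S (\<Gamma>, W) ESig (upd S ASig \<Gamma>, W')"
| Shh: "trans S \<Gamma> W (AOut c v) W' \<Longrightarrow> ext S (\<Gamma>, W) ETau (upd S (AOut c v) \<Gamma>, W')"
| TauExt: "trans S \<Gamma> W ATau W' \<Longrightarrow> ext S (\<Gamma>, W) ETau (\<Gamma>, W')"
| Deliver: "\<Gamma> c = (1, v) \<Longrightarrow> trans S \<Gamma> W ASig W' \<Longrightarrow> ext S (\<Gamma>, W) (EGamma c v) (upd S ASig \<Gamma>, W')"
| Idle: "idle \<Gamma> c \<Longrightarrow> ext S (\<Gamma>, W) (EIota c) (\<Gamma>, W)"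

definition weak_tau :: "('v, 'f) cccp_sig \<Rightarrow> 'v env \<times> ('v, 'f) sys \<Rightarrow> 'v env \<times> ('v, 'f) sys \<Rightarrow> bool" where
  "weak_tau S = (\<lambda>C C'. ext S C ETau C')\<^sup>*\<^sup>*"

definition weak_ext :: "('v, 'f) cccp_sig \<Rightarrow> 'v env \<times> ('v, 'f) sys \<Rightarrow> 'v eact \<Rightarrow> 'v env \<times> ('v, 'f) sys \<Rightarrow> bool" where
  "weak_ext S C \<alpha> C' = (\<exists>C1 C2. weak_tau S C C1 \<and> ext S C1 \<alpha> C2 \<and> weak_tau S C2 C')"

inductive wf :: "'v env \<Rightarrow> ('v, 'f) sys \<Rightarrow> bool" where
  wf_proc: "wf \<Gamma> (SProc P)"
| wf_act: "exposed \<Gamma> c \<Longrightarrow> wf \<Gamma> (SAct (CF c) P)"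
| wf_par: "wf \<Gamma> W1 \<Longrightarrow> wf \<Gamma> W2 \<Longrightarrow> wf \<Gamma> (SPar W1 W2)"
| wf_nu: "a \<notin> fcS W \<Longrightarrow> wf (\<Gamma>(a := (n, v))) (openS 0 a W) \<Longrightarrow> wf \<Gamma> (SNu n v W)"

definition wf_config :: "'v env \<Rightarrow> ('v, 'f) sys \<Rightarrow> bool" where
  "wf_config \<Gamma> W = (closedS W \<and> wf \<Gamma> W)"

definition T_in :: "chan \<Rightarrow> 'v \<Rightarrow> chan \<Rightarrow> chan \<Rightarrow> 'v \<Rightarrow> 'v \<Rightarrow> ('v, 'f) sys" where
  "T_in c v eureka fail arb no =
     SProc (PSum (PSnd (CF c) (EVal v) (PSnd (CF eureka) (EVal arb) PNil))
                 (PSnd (CF fail) (EVal no) PNil))"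

definition T_in_ok :: "('v, 'f) cccp_sig \<Rightarrow> 'v \<Rightarrow> chan \<Rightarrow> 'v \<Rightarrow> ('v, 'f) sys" where
  "T_in_ok S v eureka arb = SProc (sigmas (delta S v) (PSnd (CF eureka) (EVal arb) PNil))"

end

theory Submission imports Defs begin

inductive_cases sndE: "trans S G (SProc (PSnd c e P)) l X"
inductive_cases sumE: "trans S G (SProc (PSum P Q)) l X"
inductive_cases sleepE: "trans S G (SProc (PSleep P)) l X"
inductive_cases parE: "trans S G (SPar A B) l X"

lemma T0_out:
  assumes "trans S G (T_in c v eu fa arb no) l X" "l = ATau \<or> (\<exists>d w. l = AOut d w)"
  shows "(l = AOut c v \<and> X = T_in_ok S v eu arb) \<or> (l = AOut fa no \<and> X = SProc (sigmas (delta S no) PNil))"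
  using assms unfolding T_in_def T_in_ok_def
  by (auto elim!: sumE sndE)

lemma T0_in:
  assumes "trans S G (T_in c v eu fa arb no) (AIn d w) X"
  shows "X = T_in c v eu fa arb no"
  using assms unfolding T_in_def
  by (auto elim!: sumE sndE simp: rcv_conf_def)

lemma sig_rcv: "rcvP (sigmas (Suc n) P) d = False"
  by simp

lemma sleep_out:
  assumes "trans S G (SProc (PSleep P)) l X"
  shows "(l = ASig \<and> X = SProc P) \<or> (\<exists>d w. l = AIn d w \<and> X = SProc (PSleep P))"
  using assms by (auto elim!: sleepE simp: rcv_conf_def)

lemma Tok_eq: "delta S v \<ge> 1 \<Longrightarrow> \<exists>P. T_in_ok S v eu arb = SProc (PSleep P)"
  unfolding T_in_ok_def by (cases "delta S v") auto

lemma sig_ne: "sigmas n (PSnd a e P) \<noteq> sigmas m PNil"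
  by (induction n arbitrary: m; case_tac m; simp)

inductive_cases nilE: "trans S G (SProc PNil) l X"

lemma dead:
  assumes "trans S G (SProc (sigmas n PNil)) l X"
  shows "(l = ASig) \<or> (\<exists>d w. l = AIn d w \<and> X = SProc (sigmas n PNil))"
  using assms by (cases n) (auto elim!: sleepE nilE simp: rcv_conf_def)

lemma par_cases:
  assumes "trans S G (SPar A B) l Y" "l = ATau \<or> (\<exists>c v. l = AOut c v)"
  shows "(\<exists>A'. l=ATau \<and> trans S G A ATau A' \<and> Y = SPar A' B)
    \<or> (\<exists>B'. l=ATau \<and> trans S G B ATau B' \<and> Y = SPar A B')
    \<or> (\<exists>d w A' B'. l = AOut d w \<and> trans S G A (AOut d w) A' \<and> trans S G B (AIn d w) B' \<and> Y = SPar A' B')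
    \<or> (\<exists>d w A' B'. l = AOut d w \<and> trans S G A (AIn d w) A' \<and> trans S G B (AOut d w) B' \<and> Y = SPar A' B')"
  using assms by (auto elim!: parE)


lemma wt_step: "weak_tau S C C1 \<Longrightarrow> ext S C1 ETau C2 \<Longrightarrow> weak_tau S C C2"
  unfolding weak_tau_def by (rule rtranclp.rtrancl_into_rtrancl)

lemma we_step: "weak_ext S C a C1 \<Longrightarrow> ext S C1 ETau C2 \<Longrightarrow> weak_ext S C a C2"
  unfolding weak_ext_def using wt_step by blast

lemma we_mk: "weak_tau S C C1 \<Longrightarrow> ext S C1 a C2 \<Longrightarrow> weak_ext S C a C2"
  unfolding weak_ext_def weak_tau_def by blast

lemma T0_ign: "trans S G (T_in c v eu fa arb no) (AIn d w) (T_in c v eu fa arb no)"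
  unfolding T_in_def by (rule RcvIgn) (simp add: rcv_conf_def)

lemma Tok_ign: "delta S v \<ge> 1 \<Longrightarrow> trans S G (T_in_ok S v eu arb) (AIn d w) (T_in_ok S v eu arb)"
  apply (drule Tok_eq[where eu=eu and arb=arb])
  apply clarify
  apply (simp only:)
  by (rule RcvIgn) (simp add: rcv_conf_def)

lemma T0_fire: "trans S G (T_in c v eu fa arb no) (AOut c v) (T_in_ok S v eu arb)"
  unfolding T_in_def T_in_ok_def
  by (rule SumL) (auto intro: Snd)

lemma fwd_tau:
  assumes ign: "\<And>G d w. trans S G X (AIn d w) X" and wt: "weak_tau S C C'"
  shows "(red_i S)\<^sup>*\<^sup>* (fst C, SPar (snd C) X) (fst C', SPar (snd C') X)"
  using wt unfolding weak_tau_def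
proof (induction rule: rtranclp_induct)
  case base
  then show ?case by simp
next
  case (step y z)
  from step.hyps(2) have "red_i S (fst y, SPar (snd y) X) (fst z, SPar (snd z) X)"
  proof (cases rule: ext.cases)
    case (Shh \<Gamma> W c v W')
    then show ?thesis unfolding red_i_def
      by (auto intro!: exI[of _ "AOut c v"] SyncL ign)
  next
    case (TauExt \<Gamma> W W')
    then show ?thesis unfolding red_i_def
      by (auto intro!: exI[of _ "ATau"] TauParL)
  qed
  with step.IH show ?case by simp
qed

lemma bwd:
  assumes dpos: "delta S v \<ge> 1"
    and r: "(red_i S)\<^sup>*\<^sup>* (\<Gamma>, SPar W (T_in c v eu fa arb no)) C"
  shows "\<exists>\<Gamma>1 W1 X. C = (\<Gamma>1, SPar W1 X) \<and>
     ((X = T_in c v eu fa arb no \<and> weak_tau S (\<Gamma>, W) (\<Gamma>1, W1))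
      \<or> (X = T_in_ok S v eu arb \<and> weak_ext S (\<Gamma>, W) (EIn c v) (\<Gamma>1, W1))
      \<or> X = SProc (sigmas (delta S no) PNil))"
  using r
proof (induction rule: rtranclp_induct)
  case base
  then show ?case unfolding weak_tau_def by auto
next
  case (step y z)
  from step.IH obtain \<Gamma>1 W1 X where y: "y = (\<Gamma>1, SPar W1 X)"
    and inv: "(X = T_in c v eu fa arb no \<and> weak_tau S (\<Gamma>, W) (\<Gamma>1, W1))
      \<or> (X = T_in_ok S v eu arb \<and> weak_ext S (\<Gamma>, W) (EIn c v) (\<Gamma>1, W1))
      \<or> X = SProc (sigmas (delta S no) PNil)" by blast
  from step.hyps(2) y obtain l where l: "l = ATau \<or> (\<exists>c v. l = AOut c v)"
    and tr: "trans S \<Gamma>1 (SPar W1 X) l (snd z)" and ez: "fst z = upd S l \<Gamma>1"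
    unfolding red_i_def by auto
  obtain P where Pok: "T_in_ok S v eu arb = SProc (PSleep P)" using Tok_eq[OF dpos] by blast
  from par_cases[OF tr l] show ?case
  proof (elim disjE exE conjE)
    fix A' assume a: "l = ATau" "trans S \<Gamma>1 W1 ATau A'" "snd z = SPar A' X"
    have e: "ext S (\<Gamma>1, W1) ETau (\<Gamma>1, A')" using a(2) by (rule TauExt)
    have zz: "z = (\<Gamma>1, SPar A' X)" using a ez by (cases z) auto
    show ?case using inv e zz wt_step we_step by blast
  next
    fix B' assume a: "l = ATau" "trans S \<Gamma>1 X ATau B'" "snd z = SPar W1 B'"
    show ?case using inv a T0_out[of S \<Gamma>1 c v eu fa arb no ATau B'] dead[of S \<Gamma>1 "delta S no" ATau B']
      sleep_out[of S \<Gamma>1 P ATau B'] Pok by auto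
  next
    fix d w A' B' assume a: "l = AOut d w" "trans S \<Gamma>1 W1 (AOut d w) A'"
      "trans S \<Gamma>1 X (AIn d w) B'" "snd z = SPar A' B'"
    have e: "ext S (\<Gamma>1, W1) ETau (upd S (AOut d w) \<Gamma>1, A')" using a(2) by (rule Shh)
    have zz: "z = (upd S (AOut d w) \<Gamma>1, SPar A' B')" using a ez by (cases z) auto
    have "B' = X" using inv a(3) T0_in[of S \<Gamma>1 c v eu fa arb no d w B'] dead[of S \<Gamma>1 "delta S no" "AIn d w" B']
        sleep_out[of S \<Gamma>1 P "AIn d w" B'] Pok by auto
    then show ?case using inv e zz wt_step we_step by blast
  next
    fix d w A' B' assume a: "l = AOut d w" "trans S \<Gamma>1 W1 (AIn d w) A'"
      "trans S \<Gamma>1 X (AOut d w) B'" "snd z = SPar A' B'"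
    have zz: "z = (upd S (AOut d w) \<Gamma>1, SPar A' B')" using a ez by (cases z) auto
    have nX: "X \<noteq> T_in_ok S v eu arb" "X \<noteq> SProc (sigmas (delta S no) PNil)"
      using a(3) dead[of S \<Gamma>1 "delta S no" "AOut d w" B'] sleep_out[of S \<Gamma>1 P "AOut d w" B'] Pok by auto
    with inv have X0: "X = T_in c v eu fa arb no" and wt: "weak_tau S (\<Gamma>, W) (\<Gamma>1, W1)" by auto
    from T0_out[OF a(3)[unfolded X0]] a(1)
    have "(d = c \<and> w = v \<and> B' = T_in_ok S v eu arb) \<or> B' = SProc (sigmas (delta S no) PNil)" by auto
    then show ?case
    proof
      assume b: "d = c \<and> w = v \<and> B' = T_in_ok S v eu arb"
      have "ext S (\<Gamma>1, W1) (EIn c v) (upd S (AIn c v) \<Gamma>1, A')" using Input[of S \<Gamma>1 W1 c v A'] a(2) b by simp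
      then have "weak_ext S (\<Gamma>, W) (EIn c v) (upd S (AOut d w) \<Gamma>1, A')" using we_mk[OF wt] b by simp
      then show ?case using zz b by auto
    next
      assume "B' = SProc (sigmas (delta S no) PNil)"
      then show ?case using zz by auto
    qed
  qed
qed

theorem mainTheorem17:
  fixes S :: "('v, 'f) cccp_sig"
    and \<Gamma> \<Gamma>' :: "'v env" and W W' :: "('v, 'f) sys"
    and c eureka fail :: chan and v arb no :: 'v
  assumes delta_pos: "\<forall>u. delta S u \<ge> 1"
    and wfc: "wf_config \<Gamma> W"
    and fresh_e: "eureka \<notin> fcS W" and fresh_f: "fail \<notin> fcS W"
    and idle_e: "idle \<Gamma> eureka" and idle_f: "idle \<Gamma> fail"
    and d_arb: "delta S arb = 1" and d_no: "delta S no = 1"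
  shows "weak_ext S (\<Gamma>, W) (EIn c v) (\<Gamma>', W') \<longleftrightarrow>
         (red_i S)\<^sup>*\<^sup>* (\<Gamma>, SPar W (T_in c v eureka fail arb no)) (\<Gamma>', SPar W' (T_in_ok S v eureka arb))"
proof
  have dv: "delta S v \<ge> 1" using delta_pos by blast
  assume "weak_ext S (\<Gamma>, W) (EIn c v) (\<Gamma>', W')"
  then obtain C1 C2 where w1: "weak_tau S (\<Gamma>, W) C1" and e: "ext S C1 (EIn c v) C2"
    and w2: "weak_tau S C2 (\<Gamma>', W')" unfolding weak_ext_def by blast
  have r1: "(red_i S)\<^sup>*\<^sup>* (\<Gamma>, SPar W (T_in c v eureka fail arb no)) (fst C1, SPar (snd C1) (T_in c v eureka fail arb no))"
    using fwd_tau[OF T0_ign w1] by simp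
  from e obtain W1' where c2: "C2 = (upd S (AIn c v) (fst C1), W1')"
    and t: "trans S (fst C1) (snd C1) (AIn c v) W1'"
    by (cases rule: ext.cases) auto
  have r2: "red_i S (fst C1, SPar (snd C1) (T_in c v eureka fail arb no)) (fst C2, SPar (snd C2) (T_in_ok S v eureka arb))"
    unfolding red_i_def using c2 t
    by (auto intro!: exI[of _ "AOut c v"] SyncR T0_fire)
  have r3: "(red_i S)\<^sup>*\<^sup>* (fst C2, SPar (snd C2) (T_in_ok S v eureka arb)) (\<Gamma>', SPar W' (T_in_ok S v eureka arb))"
    using fwd_tau[OF Tok_ign[OF dv] w2] by simp
  show "(red_i S)\<^sup>*\<^sup>* (\<Gamma>, SPar W (T_in c v eureka fail arb no)) (\<Gamma>', SPar W' (T_in_ok S v eureka arb))"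
    using r1 r2 r3 by (meson rtranclp.rtrancl_into_rtrancl rtranclp_trans)
next
  have dv: "delta S v \<ge> 1" using delta_pos by blast
  assume r: "(red_i S)\<^sup>*\<^sup>* (\<Gamma>, SPar W (T_in c v eureka fail arb no)) (\<Gamma>', SPar W' (T_in_ok S v eureka arb))"
  obtain P where Pok: "T_in_ok S v eureka arb = SProc (PSleep P)" using Tok_eq[OF dv] by blast
  have n1: "T_in_ok S v eureka arb \<noteq> T_in c v eureka fail arb no" using Pok by (simp add: T_in_def)
  have n2: "T_in_ok S v eureka arb \<noteq> SProc (sigmas (delta S no) PNil)" by (simp add: T_in_ok_def sig_ne)
  show "weak_ext S (\<Gamma>, W) (EIn c v) (\<Gamma>', W')" using bwd[OF dv r] n1 n2 by auto
qed

end
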